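(* In the setting described in the context: (i) if $\mathcal B'\in M_{r+1}(\mathbb Z)$ satisfies $\mathcal A\mathcal B'=nI_{r+1}$, then $t$ divides $n$; (ii) consequently, if $(\alpha'_0,\dots,\alpha'_r)\in L^{r+1}$ satisfies $au_j(\alpha'_j)=n>0$ for all $j$ and $au_k(\alpha'_j)=0$ for all $k\ne j$ (a uniform positive dual family to $(au_0,\dots,au_r)$), then $t$ divides $n$; (iii) the family $(\alpha_0,\dots,\alpha_r)$ has the property that for every prime $p$ there is an index $0\le j\le r$ such that $\alpha_j-n'h'\notin pL$ for all $n'\in\mathbb Z$.
   Context: Let $\mathbb K$ be a number field of degree $d=r+2\ge2$ with exactly one pair of complex conjugate embeddings; order its embeddings $\sigma_1,\dots,\sigma_r$ (real), $\sigma_{r+1}=\sigma_{\mathbb C}$, $\sigma_{r+2}=\overline{\sigma_{\mathbb C}}$. A $\mathbb Q$-basis $(e_0,\dots,e_{r+1})$ of $\mathbb K$ is positive if $i\cdot\det(\sigma_j(e_{k-1}))_{1\le j,k\le d}>0$. Let $\mathfrak f\ne\mathcal O_{\mathbb K}$ be an integral ideal, $q\mathbb Z=\mathfrak f\cap\mathbb Z$, $\mathfrak b$ an integral ideal coprime to $\mathfrak f$, $L=\mathfrak f\mathfrak b^{-1}$, $\mathfrak a$ an integral ideal coprime to $\mathfrak f\mathfrak b$ with $\mathfrak a^{-1}L/L$ cyclic, $N=\mathcal N(\mathfrak a)$. An element $h\in L$ is admissible if $h/q-1\in L$ and $h/N$ generates $\mathfrak a^{-1}L/L$. Let $\mathcal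 O^{+,\times}_{\mathfrak f}$ be the group of units $\equiv1\bmod\mathfrak f$ that are positive at all real embeddings. Let $u_1,\dots,u_r\in\mathcal O^{+,\times}_{\mathfrak f}$ be such that $1,u_1,\dots,u_r$ are $\mathbb Q$-linearly independent, and $u_0=1$. Let $h\in L$ be admissible, $h=mh'$ with $m\in\mathbb Z_{>0}$ and $h'$ primitive in $L$. Fix a positive $\mathbb Z$-basis $(e_0=h',e_1,\dots,e_{r+1})$ of $L$ with $u_jh'=\sum_{k=0}^jc_{jk0}e_k$, $c_{jk0}\in\mathbb Z$, $c_{jj0}>0$; put $\lambda=\prod_{j=1}^rc_{jj0}$ and let $a:L\to\mathbb Z$ be the linear form with $\lambda a=\det(h',u_1h',\dots,u_rh',\cdot)$ (determinant of coordinates in this basis). Write $au_j$ for $y\mapsto a(u_jy)$. Let $\mathcal A=(au_j(e_k))_{0\le j\le r,\,1\le k\le r+1}\in M_{r+1}(\mathbb Z)$, with elementary divisors $1=A_0\mid A_1\mid\dots\mid A_r$, and put $t=A_r$. Let $(b_{ij})_{1\le i\le r+1,0\le j\le r}=t\mathcal A^{-1}$ (an integer matrix) and $\alpha_j=\sum_{i=1}^{r+1}b_{ij}e_i\in L$, so that $au_k(\alpha_j)=t\delta_{jk}$ for all $0\le j,k\le r$. *)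

theory Defs
  imports "Jordan_Normal_Form.Determinant" "HOL-Computational_Algebra.Primes"
begin

definition unimodular_int :: "nat \<Rightarrow> int mat \<Rightarrow> bool" where
  "unimodular_int n U \<longleftrightarrow> U \<in> carrier_mat n n \<and>
     (\<exists>V \<in> carrier_mat n n. U * V = 1\<^sub>m n \<and> V * U = 1\<^sub>m n)"

definition elementary_divisors :: "nat \<Rightarrow> int mat \<Rightarrow> (nat \<Rightarrow> int) \<Rightarrow> bool" where
  "elementary_divisors n A D \<longleftrightarrow> A \<in> carrier_mat n n \<and>
     (\<forall>i<n. 0 \<le> D i) \<and> (\<forall>i. Suc i < n \<longrightarrow> D i dvd D (Suc i)) \<and>
     (\<exists>U V. unimodular_int n U \<and> unimodular_int n V \<and>
        U * A * V = mat n n (\<lambda>(i,j). if i = j then D i else 0))"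

end

theory Submission
  imports Defs
begin


lemma coord_unique:
  fixes e :: "nat \<Rightarrow> 'a::field_char_0"
  assumes Q_indep: "\<forall>q :: nat \<Rightarrow> rat. (\<Sum>k<N. of_rat (q k) * e k) = 0 \<longrightarrow> (\<forall>k<N. q k = 0)"
    and eq: "(\<Sum>k<N. of_int (c k) * e k) = (\<Sum>k<N. of_int (d k) * e k)"
    and k: "k < N"
  shows "c k = d k"
proof -
  have "(\<Sum>k<N. of_rat (of_int (c k - d k)) * e k) = (\<Sum>k<N. of_int (c k) * e k - of_int (d k) * e k)"
    by (simp add: of_rat_diff left_diff_distrib)
  also have "\<dots> = 0" using eq by (simp add: sum_subtractf)
  finally have h: "(\<Sum>k<N. of_rat (of_int (c k - d k)) * e k) = 0" .
  have "of_int (c k - d k) = (0::rat)" using Q_indep[rule_format, OF h] k by simp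
  thus ?thesis by simp
qed

lemma comb_L:
  fixes e :: "nat \<Rightarrow> 'a::field_char_0"
  assumes crd: "\<forall>y\<in>L. y = (\<Sum>k<N. of_int (crd y k) * e k)"
    and I: "finite I" and yL: "\<forall>i\<in>I. y i \<in> L"
  shows "(\<Sum>i\<in>I. of_int (c i) * y i) = (\<Sum>k<N. of_int (\<Sum>i\<in>I. c i * crd (y i) k) * e k)"
proof -
  have "(\<Sum>i\<in>I. of_int (c i) * y i) = (\<Sum>i\<in>I. of_int (c i) * (\<Sum>k<N. of_int (crd (y i) k) * e k))"
    by (rule sum.cong) (use assms in auto)
  also have "\<dots> = (\<Sum>i\<in>I. \<Sum>k<N. of_int (c i * crd (y i) k) * e k)"
    by (simp add: sum_distrib_left mult.assoc)
  also have "\<dots> = (\<Sum>k<N. \<Sum>i\<in>I. of_int (c i * crd (y i) k) * e k)" by (rule sum.swap)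
  also have "\<dots> = (\<Sum>k<N. of_int (\<Sum>i\<in>I. c i * crd (y i) k) * e k)"
    by (simp add: sum_distrib_right)
  finally show ?thesis .
qed

lemma clear_denoms:
  fixes qq :: "nat \<Rightarrow> rat"
  shows "\<exists>m::int. m > 0 \<and> (\<forall>k<n. \<exists>z::int. of_int m * qq k = of_int z)"
proof (induction n)
  case 0 then show ?case by (intro exI[of _ 1]) auto
next
  case (Suc n)
  then obtain m where m: "m > 0" "\<forall>k<n. \<exists>z::int. of_int m * qq k = of_int z" by blast
  obtain a b where ab: "quotient_of (qq n) = (a, b)" by (cases "quotient_of (qq n)")
  have b: "b > 0" using quotient_of_denom_pos[OF ab] .
  have qn: "qq n = of_int a / of_int b" using quotient_of_div[OF ab] .
  show ?case
  proof (intro exI[of _ "m * b"] conjI)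
    show "m * b > 0" using m b by simp
    show "\<forall>k<Suc n. \<exists>z::int. of_int (m * b) * qq k = of_int z"
    proof (intro allI impI)
    fix k assume "k < Suc n"
    then consider "k < n" | "k = n" by linarith
    then show "\<exists>z::int. of_int (m * b) * qq k = of_int z"
    proof cases
      case 1
      then obtain z where "of_int m * qq k = of_int z" using m by blast
      then have "of_int (m * b) * qq k = of_int (z * b)" by (simp add: algebra_simps)
      then show ?thesis by blast
    next
      case 2
      have "of_int (m * b) * qq k = of_int (m * a)" using 2 qn b by simp
      then show ?thesis by blast
    qed
    qed
  qed
qed

lemma prod_list_diag: "prod_list (diag_mat A) = (\<Prod>i<dim_row A. A $$ (i,i))"
  unfolding diag_mat_def
  by (metis prod.distinct_set_conv_list distinct_upt set_upt lessThan_atLeast0)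



lemma ed_dvd:
  assumes ed: "elementary_divisors (Suc r) A D"
    and B': "B' \<in> carrier_mat (Suc r) (Suc r)"
    and AB: "A * B' = n \<cdot>\<^sub>m 1\<^sub>m (Suc r)"
  shows "D r dvd n"
proof -
  let ?N = "Suc r"
  define Dg where "Dg = mat ?N ?N (\<lambda>(i,j). if i = j then D i else 0)"
  from ed obtain U V where A: "A \<in> carrier_mat ?N ?N" and U: "unimodular_int ?N U" and V: "unimodular_int ?N V"
    and UAV: "U * A * V = Dg" unfolding elementary_divisors_def Dg_def by blast
  from U obtain Ui where Uc: "U \<in> carrier_mat ?N ?N" and Ui: "Ui \<in> carrier_mat ?N ?N" and UUi: "U * Ui = 1\<^sub>m ?N"
    unfolding unimodular_int_def by blast
  from V obtain Vi where Vc: "V \<in> carrier_mat ?N ?N" and Vi: "Vi \<in> carrier_mat ?N ?N" and VVi: "V * Vi = 1\<^sub>m ?N"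
    unfolding unimodular_int_def by blast
  have "Dg * (Vi * (B' * Ui)) = (U * A * V) * (Vi * (B' * Ui))" by (simp add: UAV)
  also have "\<dots> = ((U * A) * (V * Vi)) * (B' * Ui)"
    using A Uc Ui Vc Vi B' by (simp add: assoc_mult_mat[of _ ?N ?N _ ?N _ ?N])
  also have "\<dots> = U * ((A * B') * Ui)"
    using A Uc Ui Vc Vi B' by (simp add: VVi assoc_mult_mat[of _ ?N ?N _ ?N _ ?N])
  also have "\<dots> = n \<cdot>\<^sub>m 1\<^sub>m ?N"
  proof -
    have "n \<cdot>\<^sub>m 1\<^sub>m ?N * Ui = n \<cdot>\<^sub>m Ui" using Ui
      by (simp add: mult_smult_assoc_mat[of "1\<^sub>m ?N" ?N ?N Ui ?N])
    moreover have "U * (n \<cdot>\<^sub>m Ui) = n \<cdot>\<^sub>m (U * Ui)" using Uc Ui by (rule mult_smult_distrib)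
    ultimately show ?thesis by (simp add: AB UUi)
  qed
  finally have eq: "Dg * (Vi * (B' * Ui)) = n \<cdot>\<^sub>m 1\<^sub>m ?N" .
  obtain C where Cc: "C \<in> carrier_mat ?N ?N" and eqC: "Dg * C = n \<cdot>\<^sub>m 1\<^sub>m ?N"
    using eq Vi B' Ui by (intro that[of "Vi * (B' * Ui)"]) auto
  have "(Dg * C) $$ (r, r) = (\<Sum>l\<in>{0..<?N}. Dg $$ (r,l) * C $$ (l, r))"
    using Cc by (simp add: Dg_def scalar_prod_def)
  also have "\<dots> = (\<Sum>l\<in>{0..<?N}. if l = r then D r * C $$ (r, r) else 0)"
    by (rule sum.cong) (auto simp: Dg_def)
  also have "\<dots> = D r * C $$ (r, r)" by simp
  finally have "n = D r * C $$ (r, r)" using eqC by simp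
  thus ?thesis by simp
qed

lemma ed_zero:
  assumes ed: "elementary_divisors (Suc r) A D" and Dr: "D r = 0"
  shows "\<exists>q. (\<exists>j<Suc r. q j \<noteq> 0) \<and> (\<forall>k<Suc r. (\<Sum>j<Suc r. q j * A $$ (j,k)) = 0)"
proof -
  let ?N = "Suc r"
  define Dg where "Dg = mat ?N ?N (\<lambda>(i,j). if i = j then D i else 0)"
  from ed obtain U V where A: "A \<in> carrier_mat ?N ?N" and U: "unimodular_int ?N U" and V: "unimodular_int ?N V"
    and UAV: "U * A * V = Dg" unfolding elementary_divisors_def Dg_def by blast
  from U obtain Ui where Uc: "U \<in> carrier_mat ?N ?N" and Ui: "Ui \<in> carrier_mat ?N ?N" and UUi: "U * Ui = 1\<^sub>m ?N"
    unfolding unimodular_int_def by blast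
  from V obtain Vi where Vc: "V \<in> carrier_mat ?N ?N" and Vi: "Vi \<in> carrier_mat ?N ?N" and VVi: "V * Vi = 1\<^sub>m ?N"
    unfolding unimodular_int_def by blast
  have UA: "U * A = Dg * Vi"
  proof -
    have "Dg * Vi = (U * A) * (V * Vi)"
      using A Uc Vc Vi by (simp add: UAV[symmetric] assoc_mult_mat[of _ ?N ?N _ ?N _ ?N])
    also have "\<dots> = U * A" using A Uc by (simp add: VVi)
    finally show ?thesis by simp
  qed
  define q where "q j = U $$ (r, j)" for j
  show ?thesis
  proof (intro exI[of _ q] conjI allI impI)
    show "\<exists>j<?N. q j \<noteq> 0"
    proof (rule ccontr)
      assume "\<not> ?thesis"
      hence z: "\<And>j. j < ?N \<Longrightarrow> U $$ (r, j) = 0" by (auto simp: q_def)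
      have "(U * Ui) $$ (r, r) = (\<Sum>l<?N. U $$ (r,l) * Ui $$ (l, r))"
        using Uc Ui by (simp add: scalar_prod_def lessThan_atLeast0)
      also have "\<dots> = 0" using z by simp
      finally show False using UUi by simp
    qed
    fix k assume k: "k < ?N"
    have "(\<Sum>j<?N. q j * A $$ (j,k)) = (U * A) $$ (r, k)"
      using Uc A k by (simp add: q_def scalar_prod_def lessThan_atLeast0)
    also have "\<dots> = (\<Sum>l<?N. Dg $$ (r,l) * Vi $$ (l, k))"
      using Vi k by (simp add: UA Dg_def scalar_prod_def lessThan_atLeast0)
    also have "\<dots> = 0" by (rule sum.neutral) (auto simp: Dg_def Dr)
    finally show "(\<Sum>j<?N. q j * A $$ (j,k)) = 0" .
  qed
qed



theorem lemma12:
  fixes r :: nat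
    and e :: "nat \<Rightarrow> 'a :: field_char_0"
    and L :: "'a set"
    and u :: "nat \<Rightarrow> 'a"
    and cc :: "nat \<Rightarrow> nat \<Rightarrow> int"
    and crd :: "'a \<Rightarrow> nat \<Rightarrow> int"
    and a :: "'a \<Rightarrow> int"
    and lam t :: int
    and Amat B :: "int mat"
    and D :: "nat \<Rightarrow> int"
    and \<alpha> :: "nat \<Rightarrow> 'a"
  assumes Q_span: "\<forall>x. \<exists>q :: nat \<Rightarrow> rat. x = (\<Sum>k<r+2. of_rat (q k) * e k)"
    and Q_indep: "\<forall>q :: nat \<Rightarrow> rat. (\<Sum>k<r+2. of_rat (q k) * e k) = 0 \<longrightarrow> (\<forall>k<r+2. q k = 0)"
    and L_def: "L = {(\<Sum>k<r+2. of_int (c k) * e k) | c. True}"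
    and u0: "u 0 = 1"
    and u_indep: "\<forall>q :: nat \<Rightarrow> rat. (\<Sum>j\<le>r. of_rat (q j) * u j) = 0 \<longrightarrow> (\<forall>j\<le>r. q j = 0)"
    and u_L: "\<forall>j\<le>r. \<forall>y\<in>L. u j * y \<in> L"
    and tri: "\<forall>j\<in>{1..r}. u j * e 0 = (\<Sum>k\<le>j. of_int (cc j k) * e k) \<and> cc j j > 0"
    and lam_def: "lam = (\<Prod>j\<in>{1..r}. cc j j)"
    and crd: "\<forall>y\<in>L. y = (\<Sum>k<r+2. of_int (crd y k) * e k)"
    and a_def: "\<forall>y\<in>L. lam * a y =
        det (mat (r+2) (r+2) (\<lambda>(i,k). crd (if i \<le> r then u i * e 0 else y) k))"
    and A_def: "Amat = mat (r+1) (r+1) (\<lambda>(j,k). a (u j * e (k+1)))"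
    and ed: "elementary_divisors (r+1) Amat D"
    and D0: "D 0 = 1"
    and t_def: "t = D r"
    and B_carrier: "B \<in> carrier_mat (r+1) (r+1)"
    and B_def: "Amat * B = t \<cdot>\<^sub>m 1\<^sub>m (r+1)"
    and \<alpha>_def: "\<forall>j. \<alpha> j = (\<Sum>i<r+1. of_int (B $$ (i,j)) * e (i+1))"
  shows "(\<forall>B' (n::int). B' \<in> carrier_mat (r+1) (r+1) \<and> Amat * B' = n \<cdot>\<^sub>m 1\<^sub>m (r+1)
            \<longrightarrow> t dvd n)
       \<and> (\<forall>(\<alpha>' :: nat \<Rightarrow> 'a) (n::int). (\<forall>j\<le>r. \<alpha>' j \<in> L) \<and> n > 0 \<and>
            (\<forall>j\<le>r. \<forall>k\<le>r. a (u k * \<alpha>' j) = (if k = j then n else 0))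
            \<longrightarrow> t dvd n)
       \<and> (\<forall>p::int. prime p \<longrightarrow>
            (\<exists>j\<le>r. \<forall>n'::int. \<alpha> j - of_int n' * e 0 \<notin> {of_int p * y | y. y \<in> L}))"
proof -
  have lam_pos: "lam > 0" using tri unfolding lam_def by (intro prod_pos) auto
  have CU: "\<And>c d k. (\<Sum>k<r+2. of_int (c k) * e k) = (\<Sum>k<r+2. of_int (d k) * e k) \<Longrightarrow> k < r+2 \<Longrightarrow> c k = d k"
    using coord_unique[OF Q_indep] by blast
  have inL: "\<And>c. (\<Sum>k<r+2. of_int (c k) * e k) \<in> L" using L_def by blast
  have crd_eq: "crd (\<Sum>k<r+2. of_int (c k) * e k) k = c k" if "k < r+2" for c k
  proof -
    let ?y = "\<Sum>k<r+2. of_int (c k) * e k"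
    have "(\<Sum>k<r+2. of_int (crd ?y k) * e k) = ?y" using crd[rule_format, OF inL[of c]] by (rule sym)
    thus ?thesis using CU that by blast
  qed
  have e_sum: "e m = (\<Sum>k<r+2. of_int (if k = m then 1 else 0) * e k)" if "m < r+2" for m
  proof -
    have "(\<Sum>k<r+2. of_int (if k = m then 1 else 0) * e k) = (\<Sum>k<r+2. if k = m then e k else 0)"
      by (rule sum.cong) auto
    thus ?thesis using that by simp
  qed
  have eL: "e m \<in> L" if "m < r+2" for m by (subst e_sum[OF that]) (rule inL)
  have crd_e: "crd (e m) k = (if k = m then 1 else 0)" if "m < r+2" "k < r+2" for m k
    by (subst e_sum[OF that(1)]) (rule crd_eq[OF that(2)])
  have combL: "(\<Sum>i\<in>I. of_int (c i) * y i) \<in> L"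
    if "finite I" "\<forall>i\<in>I. y i \<in> L" for I c and y :: "nat \<Rightarrow> 'a"
    by (subst comb_L[OF crd that]) (rule inL)
  have combcrd: "crd (\<Sum>i\<in>I. of_int (c i) * y i) k = (\<Sum>i\<in>I. c i * crd (y i) k)"
    if "finite I" "\<forall>i\<in>I. y i \<in> L" "k < r+2" for I c k and y :: "nat \<Rightarrow> 'a"
    by (subst comb_L[OF crd that(1,2)]) (rule crd_eq[OF that(3)])
  define R where "R i k = crd (u i * e 0) k" for i k
  define M where "M v = mat (r+2) (r+2) (\<lambda>(i,k). if i \<le> r then R i k else v k)" for v :: "nat \<Rightarrow> int"
  have Mc: "M v \<in> carrier_mat (r+2) (r+2)" for v by (simp add: M_def)
  have a_M: "lam * a y = det (M (crd y))" if "y \<in> L" for y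
  proof -
    have "mat (r+2) (r+2) (\<lambda>(i,k). crd (if i \<le> r then u i * e 0 else y) k) = M (crd y)"
      unfolding M_def R_def by (rule cong_mat) auto
    thus ?thesis using a_def that by metis
  qed
  define C where "C k = cofactor (M (\<lambda>_. 0)) (r+1) k" for k
  have det_M: "det (M v) = (\<Sum>k<r+2. v k * C k)" for v
  proof -
    have "det (M v) = (\<Sum>j<r+2. M v $$ (r+1, j) * cofactor (M v) (r+1) j)"
      by (rule laplace_expansion_row[OF Mc]) simp
    also have "\<dots> = (\<Sum>k<r+2. v k * C k)"
    proof (rule sum.cong[OF refl])
      fix j assume j: "j \<in> {..<r+2}"
      have "mat_delete (M v) (r+1) j = mat_delete (M (\<lambda>_. 0)) (r+1) j"
        unfolding mat_delete_def by (rule cong_mat) (auto simp: M_def)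
      thus "M v $$ (r+1, j) * cofactor (M v) (r+1) j = v j * C j"
        using j by (simp add: C_def cofactor_def M_def)
    qed
    finally show ?thesis .
  qed
  have aF: "lam * a y = (\<Sum>k<r+2. crd y k * C k)" if "y \<in> L" for y
    using a_M[OF that] det_M by simp
  have lin: "a (\<Sum>i\<in>I. of_int (c i) * y i) = (\<Sum>i\<in>I. c i * a (y i))"
    if I: "finite I" "\<forall>i\<in>I. y i \<in> L" for I c and y :: "nat \<Rightarrow> 'a"
  proof -
    have "lam * a (\<Sum>i\<in>I. of_int (c i) * y i) = (\<Sum>k<r+2. (\<Sum>i\<in>I. c i * crd (y i) k) * C k)"
      using aF[OF combL[OF I]] combcrd[OF I] by simp
    also have "\<dots> = (\<Sum>k<r+2. \<Sum>i\<in>I. c i * (crd (y i) k * C k))"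
      by (simp add: sum_distrib_right mult.assoc)
    also have "\<dots> = (\<Sum>i\<in>I. \<Sum>k<r+2. c i * (crd (y i) k * C k))" by (rule sum.swap)
    also have "\<dots> = (\<Sum>i\<in>I. c i * (\<Sum>k<r+2. crd (y i) k * C k))"
      by (simp only: sum_distrib_left)
    also have "\<dots> = (\<Sum>i\<in>I. c i * (lam * a (y i)))"
      using aF I(2) by simp
    also have "\<dots> = lam * (\<Sum>i\<in>I. c i * a (y i))"
      by (simp add: sum_distrib_left mult.left_commute)
    finally show ?thesis using lam_pos by simp
  qed
  have G: "a (u j * y) = (\<Sum>k<r+2. crd y k * a (u j * e k))" if "j \<le> r" "y \<in> L" for j y
  proof -
    have "u j * y = u j * (\<Sum>k<r+2. of_int (crd y k) * e k)"
      using crd[rule_format, OF that(2)] by (rule arg_cong)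
    also have "\<dots> = (\<Sum>k<r+2. of_int (crd y k) * (u j * e k))"
      by (simp only: sum_distrib_left mult.left_commute)
    finally have "u j * y = (\<Sum>k<r+2. of_int (crd y k) * (u j * e k))" .
    moreover have "\<forall>k\<in>{..<r+2}. u j * e k \<in> L" using u_L that(1) eL by auto
    ultimately show ?thesis using lin[of "{..<r+2}" "\<lambda>k. u j * e k" "crd y"] by simp
  qed
  have a_ue0: "a (u j * e 0) = 0" if "j \<le> r" for j
  proof -
    have uL: "u j * e 0 \<in> L" using u_L that eL[of 0] by auto
    have "det (M (crd (u j * e 0))) = 0"
    proof (rule det_identical_rows[OF Mc, of j "r+1"])
      show "row (M (crd (u j * e 0))) j = row (M (crd (u j * e 0))) (r+1)"
        using that by (intro eq_vecI) (auto simp: M_def R_def)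
    qed (use that in auto)
    thus ?thesis using a_M[OF uL] lam_pos by simp
  qed
  have R0: "R 0 k = (if k = 0 then 1 else 0)" if "k < r+2" for k
    using crd_e[of 0 k] that by (simp add: R_def u0)
  have Ri: "R i k = (if k \<le> i then cc i k else 0)" if i: "i \<in> {1..r}" and k: "k < r+2" for i k
  proof -
    have "(\<Sum>k<r+2. of_int (if k \<le> i then cc i k else 0) * e k)
          = (\<Sum>k<r+2. if k \<le> i then of_int (cc i k) * e k else 0)"
      by (rule sum.cong) auto
    also have "\<dots> = (\<Sum>k\<in>{x\<in>{..<r+2}. x \<le> i}. of_int (cc i k) * e k)"
      by (rule sum.inter_filter[symmetric]) simp
    also have "{x\<in>{..<r+2}. x \<le> i} = {..i}" using i by auto
    also have "(\<Sum>k\<le>i. of_int (cc i k) * e k) = u i * e 0" using tri i by simp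
    finally have ue: "u i * e 0 = (\<Sum>k<r+2. of_int (if k \<le> i then cc i k else 0) * e k)" by simp
    show ?thesis unfolding R_def by (subst ue) (rule crd_eq[OF k])
  qed
  have Mlow: "M v $$ (i,j) = 0" if "i < j" "j < r+2" for v i j
  proof -
    have ir: "i \<le> r" using that by simp
    show ?thesis
    proof (cases "i = 0")
      case True thus ?thesis using that R0[of j] by (simp add: M_def)
    next
      case False thus ?thesis using that ir Ri[of i j] by (simp add: M_def)
    qed
  qed
  have a_er1: "a (e (r+1)) = 1"
  proof -
    let ?v = "crd (e (r+1))"
    have "lam * a (e (r+1)) = det (M ?v)" using a_M eL[of "r+1"] by simp
    also have "\<dots> = prod_list (diag_mat (M ?v))"
      by (rule det_lower_triangular[OF _ Mc]) (rule Mlow)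
    also have "\<dots> = (\<Prod>i<r+2. M ?v $$ (i,i))" by (simp add: prod_list_diag M_def)
    also have "\<dots> = (\<Prod>i\<in>{1..r}. M ?v $$ (i,i))"
    proof (rule prod.mono_neutral_right)
      show "\<forall>i\<in>{..<r+2} - {1..r}. M ?v $$ (i,i) = 1"
      proof
        fix i assume "i \<in> {..<r+2} - {1..r}"
        then have "i = 0 \<or> i = r+1" by auto
        thus "M ?v $$ (i,i) = 1" using R0[of 0] crd_e[of "r+1" "r+1"] by (auto simp: M_def)
      qed
    qed auto
    also have "\<dots> = lam" unfolding lam_def
      by (rule prod.cong[OF refl]) (use Ri in \<open>auto simp: M_def\<close>)
    finally show ?thesis using lam_pos by simp
  qed
  have Acar: "Amat \<in> carrier_mat (r+1) (r+1)" using A_def by simp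
  have Aent: "Amat $$ (j,k) = a (u j * e (k+1))" if "j < r+1" "k < r+1" for j k
    using that A_def by simp
  have t0: "t \<noteq> 0"
  proof
    assume "t = 0"
    then have Dr: "D r = 0" using t_def by simp
    have ed': "elementary_divisors (Suc r) Amat D" using ed by simp
    from ed_zero[OF ed' Dr] obtain q where qnz: "\<exists>j<Suc r. q j \<noteq> 0"
      and qA: "\<forall>k<Suc r. (\<Sum>j<Suc r. q j * Amat $$ (j,k)) = 0" by auto
    define w where "w = (\<Sum>j\<le>r. of_int (q j) * u j)"
    have wnz: "w \<noteq> 0"
    proof
      assume "w = 0"
      hence h: "(\<Sum>j\<le>r. of_rat (of_int (q j)) * u j) = 0" by (simp add: w_def)
      have "\<forall>j\<le>r. (of_int (q j) :: rat) = 0" using u_indep[rule_format, OF h] by blast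
      thus False using qnz by (auto simp: less_Suc_eq_le)
    qed
    have aw: "a (w * y) = 0" if y: "y \<in> L" for y
    proof -
      have "w * y = (\<Sum>j\<le>r. of_int (q j) * (u j * y))" by (simp add: w_def sum_distrib_right mult.assoc)
      moreover have "\<forall>j\<in>{..r}. u j * y \<in> L" using u_L y by auto
      ultimately have "a (w*y) = (\<Sum>j\<le>r. q j * a (u j * y))"
        using lin[of "{..r}" "\<lambda>j. u j * y" q] by simp
      also have "\<dots> = (\<Sum>j\<le>r. q j * (\<Sum>k<r+2. crd y k * a (u j * e k)))" using G y by simp
      also have "\<dots> = (\<Sum>j\<le>r. \<Sum>k<r+2. crd y k * (q j * a (u j * e k)))"
        by (simp only: sum_distrib_left mult.left_commute)
      also have "\<dots> = (\<Sum>k<r+2. \<Sum>j\<le>r. crd y k * (q j * a (u j * e k)))" by (rule sum.swap)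
      also have "\<dots> = (\<Sum>k<r+2. crd y k * (\<Sum>j\<le>r. q j * a (u j * e k)))"
        by (simp only: sum_distrib_left)
      also have "\<dots> = 0"
      proof (rule sum.neutral, rule ballI)
        fix k assume k: "k \<in> {..<r+2}"
        have "(\<Sum>j\<le>r. q j * a (u j * e k)) = 0"
        proof (cases k)
          case 0 thus ?thesis using a_ue0 by simp
        next
          case (Suc k')
          have "(\<Sum>j\<le>r. q j * a (u j * e k)) = (\<Sum>j<Suc r. q j * Amat $$ (j,k'))"
            unfolding lessThan_Suc_atMost
            by (rule sum.cong[OF refl]) (use Suc k Aent in auto)
          thus ?thesis using qA Suc k by simp
        qed
        thus "crd y k * (\<Sum>j\<le>r. q j * a (u j * e k)) = 0" by simp
      qed
      finally show ?thesis .
    qed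
    obtain qq where qq: "e (r+1) / w = (\<Sum>k<r+2. of_rat (qq k) * e k)" using Q_span by blast
    obtain m where m: "m > 0" and mz: "\<forall>k<r+2. \<exists>z::int. of_int m * qq k = of_int z"
      using clear_denoms by blast
    then obtain zf where zf: "\<forall>k<r+2. of_int m * qq k = of_int (zf k)" by metis
    define y where "y = (\<Sum>k<r+2. of_int (zf k) * e k)"
    have yL: "y \<in> L" using inL y_def by simp
    have "y = (\<Sum>k<r+2. of_rat (of_int m * qq k) * e k)"
      unfolding y_def by (rule sum.cong[OF refl]) (use zf in auto)
    also have "\<dots> = of_int m * (\<Sum>k<r+2. of_rat (qq k) * e k)"
      by (simp only: of_rat_mult of_rat_of_int_eq sum_distrib_left mult.assoc)
    also have "\<dots> = of_int m * (e (r+1) / w)" by (simp only: qq)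
    finally have "w * y = of_int m * e (r+1)" using wnz by simp
    hence "a (w*y) = m" using lin[of "{r+1}" e "\<lambda>_. m"] eL[of "r+1"] a_er1 by simp
    thus False using aw[OF yL] m by simp
  qed
  have P1: "\<forall>B' (n::int). B' \<in> carrier_mat (r+1) (r+1) \<and> Amat * B' = n \<cdot>\<^sub>m 1\<^sub>m (r+1) \<longrightarrow> t dvd n"
    using ed_dvd[of r Amat D] ed t_def by auto
  have P2: "\<forall>(\<alpha>' :: nat \<Rightarrow> 'a) (n::int). (\<forall>j\<le>r. \<alpha>' j \<in> L) \<and> n > 0 \<and>
            (\<forall>j\<le>r. \<forall>k\<le>r. a (u k * \<alpha>' j) = (if k = j then n else 0))
            \<longrightarrow> t dvd n"
  proof (intro allI impI)
    fix \<alpha>' :: "nat \<Rightarrow> 'a" and n :: int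
    assume H: "(\<forall>j\<le>r. \<alpha>' j \<in> L) \<and> n > 0 \<and>
            (\<forall>j\<le>r. \<forall>k\<le>r. a (u k * \<alpha>' j) = (if k = j then n else 0))"
    define B' where "B' = mat (r+1) (r+1) (\<lambda>(i,j). crd (\<alpha>' j) (i+1))"
    have B'c: "B' \<in> carrier_mat (r+1) (r+1)" by (simp add: B'_def)
    have "Amat * B' = n \<cdot>\<^sub>m 1\<^sub>m (r+1)"
    proof (rule eq_matI)
      fix k j assume k: "k < dim_row (n \<cdot>\<^sub>m 1\<^sub>m (r+1))" and j: "j < dim_col (n \<cdot>\<^sub>m 1\<^sub>m (r+1))"
      hence kr: "k < r+1" "j < r+1" by auto
      have "(Amat * B') $$ (k,j) = (\<Sum>i\<in>{0..<r+1}. Amat $$ (k,i) * B' $$ (i,j))"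
        using kr Acar B'c by (simp add: scalar_prod_def)
      also have "\<dots> = (\<Sum>i<r+1. crd (\<alpha>' j) (Suc i) * a (u k * e (Suc i)))"
        unfolding atLeast0LessThan
        by (rule sum.cong[OF refl]) (use kr in \<open>auto simp: Aent B'_def\<close>)
      also have "\<dots> = crd (\<alpha>' j) 0 * a (u k * e 0) + (\<Sum>i<r+1. crd (\<alpha>' j) (Suc i) * a (u k * e (Suc i)))"
        using a_ue0[of k] kr by simp
      also have "\<dots> = (\<Sum>i<Suc (r+1). crd (\<alpha>' j) i * a (u k * e i))"
        by (rule sum.lessThan_Suc_shift[symmetric])
      also have "\<dots> = a (u k * \<alpha>' j)" using G[of k "\<alpha>' j"] H kr by simp
      also have "\<dots> = (n \<cdot>\<^sub>m 1\<^sub>m (r+1)) $$ (k,j)" using H kr by simp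
      finally show "(Amat * B') $$ (k,j) = (n \<cdot>\<^sub>m 1\<^sub>m (r+1)) $$ (k,j)" .
    qed (use Acar B'c in auto)
    thus "t dvd n" using P1 B'c by blast
  qed
  have P3: "\<forall>p::int. prime p \<longrightarrow>
            (\<exists>j\<le>r. \<forall>n'::int. \<alpha> j - of_int n' * e 0 \<notin> {of_int p * y | y. y \<in> L})"
  proof (intro allI impI)
    fix p :: int assume p: "prime p"
    show "\<exists>j\<le>r. \<forall>n'::int. \<alpha> j - of_int n' * e 0 \<notin> {of_int p * y | y. y \<in> L}"
    proof (rule ccontr)
      assume "\<not> ?thesis"
      hence Hn: "\<forall>j\<le>r. \<exists>n'::int. \<alpha> j - of_int n' * e 0 \<in> {of_int p * y | y. y \<in> L}" by blast
      have dv: "p dvd B $$ (i,j)" if i: "i \<le> r" and j: "j \<le> r" for i j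
      proof -
        obtain n' y where y: "y \<in> L" and eq: "\<alpha> j - of_int n' * e 0 = of_int p * y"
          using Hn j by blast
        define cf where "cf k = (if k = 0 then - n' else B $$ (k - 1, j))" for k
        have "(\<Sum>k<Suc (r+1). of_int (cf k) * e k) = of_int (cf 0) * e 0 + (\<Sum>i<r+1. of_int (cf (Suc i)) * e (Suc i))"
          by (rule sum.lessThan_Suc_shift)
        also have "\<dots> = \<alpha> j - of_int n' * e 0" by (simp add: cf_def \<alpha>_def)
        finally have e1: "\<alpha> j - of_int n' * e 0 = (\<Sum>k<r+2. of_int (cf k) * e k)" by simp
        have "of_int p * y = of_int p * (\<Sum>k<r+2. of_int (crd y k) * e k)"
          using crd[rule_format, OF y] by (rule arg_cong)
        also have "\<dots> = (\<Sum>k<r+2. of_int (p * crd y k) * e k)"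
          by (simp only: sum_distrib_left mult.assoc of_int_mult)
        finally have "cf (Suc i) = p * crd y (Suc i)" using CU[of cf "\<lambda>k. p * crd y k" "Suc i"] e1 eq i by simp
        thus ?thesis by (simp add: cf_def)
      qed
      define B2 where "B2 = mat (r+1) (r+1) (\<lambda>(i,j). B $$ (i,j) div p)"
      have B2c: "B2 \<in> carrier_mat (r+1) (r+1)" by (simp add: B2_def)
      have BB: "B = p \<cdot>\<^sub>m B2"
        by (rule eq_matI) (use B_carrier dv in \<open>auto simp: B2_def\<close>)
      have AB2: "t \<cdot>\<^sub>m 1\<^sub>m (r+1) = p \<cdot>\<^sub>m (Amat * B2)"
        using B_def BB mult_smult_distrib[OF Acar B2c] by simp
      have ent: "t * (if k = j then 1 else 0) = p * (Amat * B2) $$ (k,j)" if "k < r+1" "j < r+1" for k j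
      proof -
        have "(t \<cdot>\<^sub>m 1\<^sub>m (r+1)) $$ (k,j) = (p \<cdot>\<^sub>m (Amat * B2)) $$ (k,j)" using AB2 by simp
        thus ?thesis using that Acar B2c by simp
      qed
      have "p dvd t" using ent[of 0 0] by simp
      then obtain s where ts: "t = p * s" by blast
      have p0: "p \<noteq> 0" using p by auto
      have "Amat * B2 = s \<cdot>\<^sub>m 1\<^sub>m (r+1)"
      proof (rule eq_matI)
        fix k j assume "k < dim_row (s \<cdot>\<^sub>m 1\<^sub>m (r+1))" "j < dim_col (s \<cdot>\<^sub>m 1\<^sub>m (r+1))"
        hence kr: "k < r+1" "j < r+1" by auto
        have "p * (Amat * B2) $$ (k,j) = p * (s * (if k = j then 1 else 0))"
          using ent[OF kr] unfolding ts mult.assoc by (rule sym)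
        hence "(Amat * B2) $$ (k,j) = s * (if k = j then 1 else 0)" using mult_left_cancel[OF p0] by blast
        thus "(Amat * B2) $$ (k,j) = (s \<cdot>\<^sub>m 1\<^sub>m (r+1)) $$ (k,j)" using kr by simp
      qed (use Acar B2c in auto)
      hence "t dvd s" using P1 B2c by blast
      hence "p * s dvd 1 * s" using ts by simp
      moreover have "s \<noteq> 0" using ts t0 by auto
      ultimately have "p dvd 1" by (simp only: dvd_mult_cancel_right) simp
      thus False using p not_prime_unit by blast
    qed
  qed
  show ?thesis using P1 P2 P3 by blast
qed

end
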